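(* Let $p$ be an odd prime, $m\geq 1$, $Q=T_{(p^m)}$ and $K=K_Q(p)$. An element $M\in K$ satisfies $M^p=\mathbbm{1}$ if either $M=S_\xi$ for some $S_\xi\in T_{(p)}$, or $M=S_\xi X^b$ with $S_\xi\in Q$ and $b\neq 0$.
   Context: Let $\{|q\rangle:q\in\mathbb{Z}_p\}$ be the computational basis of $\mathbb{C}^p$ and $X|q\rangle=|q+1\rangle$ the shift operator. For $\xi:\mathbb{Z}_p\to U(1)$ let $S_\xi=\mathrm{diag}(\xi(0),\dots,\xi(p-1))$. Let $T=\{S_\xi:\prod_{q\in\mathbb{Z}_p}\xi(q)=1\}$ (a maximal torus of $SU(p)$) and for $k\ge1$, $T_{(p^k)}=\{S\in T: S^{p^k}=\mathbbm{1}\}$. $K_Q(p)$ is the subgroup of $SU(p)$ generated by all $S_\xi X^b$ with $S_\xi\in Q$, $b\in\mathbb{Z}_p$. *)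

theory Defs
  imports "HOL-Analysis.Analysis" "Jordan_Normal_Form.Matrix"
begin

text \<open>Matrices on C^p with computational basis indexed by 0..p-1 (representing Z_p).\<close>

text \<open>Shift operator X |q> = |q+1 mod p>: entry (i,j) is 1 iff i = (j+1) mod p.\<close>
definition shift_mat :: "nat \<Rightarrow> complex mat" where
  "shift_mat p = mat p p (\<lambda>(i,j). if i = (j + 1) mod p then 1 else 0)"

definition S_mat :: "nat \<Rightarrow> (nat \<Rightarrow> complex) \<Rightarrow> complex mat" where
  "S_mat p xi = mat p p (\<lambda>(i,j). if i = j then xi i else 0)"

definition torus :: "nat \<Rightarrow> complex mat set" where
  "torus p = {S_mat p xi | xi. (\<forall>q<p. cmod (xi q) = 1) \<and> (\<Prod>q<p. xi q) = 1}"

definition torus_pow :: "nat \<Rightarrow> nat \<Rightarrow> complex mat set" where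
  "torus_pow p k = {S \<in> torus p. S ^\<^sub>m (p ^ k) = 1\<^sub>m p}"

text \<open>Conjugate transpose (the group inverse in SU(p)).\<close>
definition adj_mat :: "complex mat \<Rightarrow> complex mat" where
  "adj_mat M = mat (dim_col M) (dim_row M) (\<lambda>(i,j). cnj (M $$ (j,i)))"

inductive_set gen_subgroup :: "nat \<Rightarrow> complex mat set \<Rightarrow> complex mat set"
  for p :: nat and G :: "complex mat set" where
  gen_one: "1\<^sub>m p \<in> gen_subgroup p G"
| gen_base: "g \<in> G \<Longrightarrow> g \<in> gen_subgroup p G"
| gen_mult: "a \<in> gen_subgroup p G \<Longrightarrow> b \<in> gen_subgroup p G \<Longrightarrow> a * b \<in> gen_subgroup p G"
| gen_inv: "a \<in> gen_subgroup p G \<Longrightarrow> adj_mat a \<in> gen_subgroup p G"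

definition K_Q :: "complex mat set \<Rightarrow> nat \<Rightarrow> complex mat set" where
  "K_Q Q p = gen_subgroup p {S * (shift_mat p ^\<^sub>m b) | S b. S \<in> Q \<and> b < p}"

end

theory Submission
  imports Defs "HOL-Number_Theory.Number_Theory"
begin

definition gp :: "nat \<Rightarrow> nat \<Rightarrow> (nat \<Rightarrow> complex) \<Rightarrow> complex mat" where
  "gp p a f = mat p p (\<lambda>(i,j). if i = (j + a) mod p then f j else 0)"

lemma gp_dim[simp]: "dim_row (gp p a f) = p" "dim_col (gp p a f) = p"
  by (auto simp: gp_def)

lemma gp_mult:
  assumes "p > 0"
  shows "gp p a f * gp p b g = gp p (a + b) (\<lambda>j. g j * f ((j + b) mod p))"
proof (rule eq_matI)
  fix i j assume ij: "i < dim_row (gp p (a + b) (\<lambda>j. g j * f ((j + b) mod p)))"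
    "j < dim_col (gp p (a + b) (\<lambda>j. g j * f ((j + b) mod p)))"
  hence i: "i < p" and j: "j < p" by (auto simp: gp_def)
  have "(gp p a f * gp p b g) $$ (i, j) =
     (\<Sum>l\<in>{0..<p}. (if i = (l + a) mod p then f l else 0) * (if l = (j + b) mod p then g j else 0))"
    using i j by (simp add: gp_def scalar_prod_def)
  also have "\<dots> = (\<Sum>l\<in>{0..<p}. if l = (j + b) mod p then
        (if i = (l + a) mod p then f l else 0) * g j else 0)"
    by (rule sum.cong) auto
  also have "\<dots> = (if i = ((j + b) mod p + a) mod p then f ((j + b) mod p) else 0) * g j"
    using assms by (simp add: sum.delta)
  also have "\<dots> = gp p (a + b) (\<lambda>j. g j * f ((j + b) mod p)) $$ (i, j)"
    using i j by (simp add: gp_def mod_add_left_eq mod_add_right_eq add.commute add.left_commute)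
  finally show "(gp p a f * gp p b g) $$ (i, j) = gp p (a + b) (\<lambda>j. g j * f ((j + b) mod p)) $$ (i, j)" .
qed (auto simp: gp_def)

lemma shift_gp: "shift_mat p = gp p 1 (\<lambda>_. 1)"
  unfolding shift_mat_def gp_def by simp

lemma one_gp: "p > 0 \<Longrightarrow> 1\<^sub>m p = gp p 0 (\<lambda>_. 1)"
  unfolding gp_def by (rule eq_matI) auto

lemma shift_pow: "p > 0 \<Longrightarrow> shift_mat p ^\<^sub>m n = gp p n (\<lambda>_. 1)"
proof (induction n)
  case 0 then show ?case by (simp add: shift_gp one_gp[symmetric])
next
  case (Suc n) then show ?case by (simp add: shift_gp gp_mult)
qed

lemma S_gp: "S_mat p xi = gp p 0 xi"
  unfolding S_mat_def gp_def by (rule eq_matI) auto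

lemma S_shift: "p > 0 \<Longrightarrow> S_mat p xi * shift_mat p ^\<^sub>m b = gp p b (\<lambda>j. xi ((j + b) mod p))"
  by (simp add: S_gp shift_pow gp_mult)

lemma gp_pow:
  assumes "p > 0"
  shows "gp p b (\<lambda>j. xi ((j + b) mod p)) ^\<^sub>m n
      = gp p (n * b) (\<lambda>j. \<Prod>k<n. xi ((j + (k + 1) * b) mod p))"
proof (induction n)
  case 0 then show ?case using assms by (simp add: one_gp[symmetric])
next
  case (Suc n)
  have "(\<lambda>j::nat. xi ((j + b) mod p) * (\<Prod>k<n. xi (((j + b) mod p + (k + 1) * b) mod p)))
      = (\<lambda>j. \<Prod>k<Suc n. xi ((j + (k + 1) * b) mod p))"
  proof
    fix j
    have "(\<Prod>k<Suc n. xi ((j + (k + 1) * b) mod p)) = xi ((j + b) mod p) * (\<Prod>k<n. xi ((j + (Suc k + 1) * b) mod p))"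
      by (subst prod.lessThan_Suc_shift) simp
    also have "(\<Prod>k<n. xi ((j + (Suc k + 1) * b) mod p)) = (\<Prod>k<n. xi (((j + b) mod p + (k + 1) * b) mod p))"
      proof (rule prod.cong)
      fix k
      have "((j + b) mod p + (k + 1) * b) mod p = ((j + b) + (k + 1) * b) mod p" by (rule mod_add_left_eq)
      moreover have "(j + b) + (k + 1) * b = j + (Suc k + 1) * b" by simp
      ultimately show "xi ((j + (Suc k + 1) * b) mod p) = xi (((j + b) mod p + (k + 1) * b) mod p)" by (metis)
    qed simp
    finally show "xi ((j + b) mod p) * (\<Prod>k<n. xi (((j + b) mod p + (k + 1) * b) mod p))
      = (\<Prod>k<Suc n. xi ((j + (k + 1) * b) mod p))" by simp
  qed
  moreover have "n * b + b = Suc n * b" by simp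
  ultimately show ?case unfolding pow_mat.simps Suc gp_mult[OF assms] by metis
qed


lemma reindex_prod:
  assumes p: "prime p" and b: "0 < b" "b < p"
  shows "(\<Prod>k<p. (xi::nat\<Rightarrow>complex) ((j + (k + 1) * b) mod p)) = (\<Prod>q<p. xi q)"
proof -
  let ?f = "\<lambda>k. (j + (k + 1) * b) mod p"
  have cop: "coprime b p" using p b
    by (metis nat_dvd_not_less prime_imp_coprime_nat coprime_commute)
  have inj: "inj_on ?f {..<p}"
  proof (rule inj_onI)
    fix x y assume x: "x \<in> {..<p}" and y: "y \<in> {..<p}" and e: "?f x = ?f y"
    have "[j + (x + 1) * b = j + (y + 1) * b] (mod p)" using e by (simp add: cong_def)
    hence "[(x + 1) * b = (y + 1) * b] (mod p)" by (simp add: cong_add_lcancel_nat)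
    hence "[x + 1 = y + 1] (mod p)" using cop cong_mult_rcancel_nat by blast
    hence "[x = y] (mod p)" by (metis cong_add_rcancel_nat)
    thus "x = y" using x y cong_less_modulus_unique_nat by auto
  qed
  have sub: "?f ` {..<p} \<subseteq> {..<p}" using p prime_gt_0_nat by auto
  have img: "?f ` {..<p} = {..<p}"
    by (rule card_subset_eq) (use sub card_image[OF inj] in auto)
  have "(\<Prod>q<p. xi q) = (\<Prod>q\<in>?f ` {..<p}. xi q)" using img by simp
  also have "\<dots> = (\<Prod>k<p. xi (?f k))" using inj by (simp add: prod.reindex)
  finally show ?thesis by simp
qed

theorem lemma2:
  fixes p m :: nat and M :: "complex mat"
  assumes "prime p" and "odd p" and "m \<ge> 1"
    and "M \<in> K_Q (torus_pow p m) p"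
    and "M \<in> torus_pow p 1 \<or>
         (\<exists>S b. S \<in> torus_pow p m \<and> 0 < b \<and> b < p \<and> M = S * (shift_mat p ^\<^sub>m b))"
  shows "M ^\<^sub>m p = 1\<^sub>m p"
  using assms(5)
proof
  assume "M \<in> torus_pow p 1" thus ?thesis by (simp add: torus_pow_def)
next
  assume "\<exists>S b. S \<in> torus_pow p m \<and> 0 < b \<and> b < p \<and> M = S * (shift_mat p ^\<^sub>m b)"
  then obtain S b where S: "S \<in> torus_pow p m" and b: "0 < b" "b < p"
    and M: "M = S * (shift_mat p ^\<^sub>m b)" by blast
  then obtain xi where Sx: "S = S_mat p xi" and pr: "(\<Prod>q<p. xi q) = 1"
    by (auto simp: torus_pow_def torus_def)
  have p0: "p > 0" using assms(1) prime_gt_0_nat by blast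
  have "M ^\<^sub>m p = gp p (p * b) (\<lambda>j. \<Prod>k<p. xi ((j + (k + 1) * b) mod p))"
    unfolding M Sx S_shift[OF p0] gp_pow[OF p0] ..
  also have "\<dots> = 1\<^sub>m p"
  proof (rule eq_matI)
    fix i j assume "i < dim_row (1\<^sub>m p :: complex mat)" "j < dim_col (1\<^sub>m p :: complex mat)"
    hence i: "i < p" and j: "j < p" by auto
    have "(j + p * b) mod p = j" using j by simp
    thus "gp p (p * b) (\<lambda>j. \<Prod>k<p. xi ((j + (k + 1) * b) mod p)) $$ (i, j) = 1\<^sub>m p $$ (i, j)"
      using i j reindex_prod[OF assms(1) b, of xi j] pr by (simp add: gp_def)
  qed auto
  finally show ?thesis .
qed

end
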